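(* Let $(X,\mathcal{S})$ be a finite set system with $|X|=n=2^k$ for an integer $k\ge1$, and let the packings $\mathcal{F}_j$, the chains $F_j(S)$, the classes $\mathcal{S}_i$ and the families $\mathcal{F}_j^i$ be as defined in the context. Then for every $1\le i\le k$, every $S\in\mathcal{S}_i$ and every $j$ with $i-1\le j\le k$, $$|S\triangle F_j(S)|<\frac{n}{2^{j-1}} .$$
   Context: $\triangle$ denotes symmetric difference. Construction: set $\mathcal{F}_0=\{\emptyset\}$, and for $j=1,\dots,k$ let $\mathcal{F}_j\subseteq\mathcal{S}$ be a family that is maximal under inclusion subject to $|F\triangle F'|>n/2^j$ for all distinct $F,F'\in\mathcal{F}_j$. For $S\in\mathcal{S}$ define the nearest-neighbor chain $F_k(S):=S$ and, for $j=k,k-1,\dots,1$, let $F_{j-1}(S)$ be an element of $\mathcal{F}_{j-1}$ minimizing $|F_j(S)\triangle F|$ over $F\in\mathcal{F}_{j-1}$. For $i=1,\dots,k$ let $\mathcal{S}_i=\{S\in\mathcal{S}: n/2^i\le|S|<n/2^{i-1}\}$, and for $j=i-1,\dots,k$ let $\mathcal{F}_j^i=\{F_j(S):S\in\mathcal{S}_i\}$. *)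

theory Defs
  imports Complex_Main
begin

definition sep_family :: "'a set set \<Rightarrow> real \<Rightarrow> 'a set set \<Rightarrow> bool" where
  "sep_family SS r P \<longleftrightarrow> P \<subseteq> SS \<and>
     (\<forall>F\<in>P. \<forall>F'\<in>P. F \<noteq> F' \<longrightarrow> real (card (sym_diff F F')) > r)"

definition maximal_sep_family :: "'a set set \<Rightarrow> real \<Rightarrow> 'a set set \<Rightarrow> bool" where
  "maximal_sep_family SS r P \<longleftrightarrow> sep_family SS r P \<and>
     (\<forall>Q. sep_family SS r Q \<and> P \<subseteq> Q \<longrightarrow> Q = P)"

end

theory Submission
  imports Defs
begin


lemma maximal_near:
  assumes "maximal_sep_family SS r P" "S \<in> SS" "r \<ge> 0"
  shows "\<exists>F\<in>P. real (card (sym_diff S F)) \<le> r"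
proof (rule ccontr)
  assume H: "\<not> ?thesis"
  hence nP: "S \<notin> P" using assms(3) by fastforce
  have "sep_family SS r (insert S P)"
    using assms(1,2) H unfolding maximal_sep_family_def sep_family_def
    by (auto simp: Un_commute not_le)
  hence "insert S P = P" using assms(1) unfolding maximal_sep_family_def by blast
  thus False using nP by blast
qed

lemma card_symdiff_tri:
  assumes "finite A" "finite B" "finite C"
  shows "card (sym_diff A C) \<le> card (sym_diff A B) + card (sym_diff B C)"
proof -
  have "sym_diff A C \<subseteq> sym_diff A B \<union> sym_diff B C" by blast
  hence "card (sym_diff A C) \<le> card (sym_diff A B \<union> sym_diff B C)"
    by (intro card_mono) (use assms in auto)
  also have "\<dots> \<le> card (sym_diff A B) + card (sym_diff B C)" by (rule card_Un_le)
  finally show ?thesis .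
qed

theorem mainTheorem5:
  fixes X :: "'a set" and SS :: "'a set set" and n k :: nat
    and Fam :: "nat \<Rightarrow> 'a set set" and ch :: "nat \<Rightarrow> 'a set \<Rightarrow> 'a set"
  assumes finX: "finite X"
    and SSX: "SS \<subseteq> Pow X"
    and k1: "k \<ge> 1"
    and cardX: "card X = n" and n_def: "n = 2 ^ k"
    and Fam0: "Fam 0 = {{}}"
    and Famj: "\<And>j. 1 \<le> j \<Longrightarrow> j \<le> k \<Longrightarrow> maximal_sep_family SS (real n / 2 ^ j) (Fam j)"
    and ch_top: "\<And>S. S \<in> SS \<Longrightarrow> ch k S = S"
    and ch_step: "\<And>S j. S \<in> SS \<Longrightarrow> 1 \<le> j \<Longrightarrow> j \<le> k \<Longrightarrow>
        ch (j - 1) S \<in> Fam (j - 1) \<and>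
        (\<forall>F\<in>Fam (j - 1). card (sym_diff (ch j S) (ch (j - 1) S)) \<le> card (sym_diff (ch j S) F))"
  shows "\<forall>i. 1 \<le> i \<and> i \<le> k \<longrightarrow>
           (\<forall>S\<in>{S \<in> SS. real n / 2 ^ i \<le> real (card S) \<and> real (card S) < real n / 2 powr (real i - 1)}.
             (\<forall>j. i - 1 \<le> j \<and> j \<le> k \<longrightarrow>
                real (card (sym_diff S (ch j S))) < real n / 2 powr (real j - 1)))"
  proof (intro allI impI ballI)
  fix i S j
  assume S: "S \<in> {S \<in> SS. real n / 2 ^ i \<le> real (card S) \<and> real (card S) < real n / 2 powr (real i - 1)}"
    and j: "i - 1 \<le> j \<and> j \<le> k"
  have SS0: "S \<in> SS" using S by blast
  have inSS: "ch l S \<in> SS" if "1 \<le> l" "l \<le> k" for l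
  proof (cases "l = k")
    case True thus ?thesis using ch_top SS0 by simp
  next
    case False
    have "ch l S \<in> Fam l" using ch_step[OF SS0, of "l+1"] that False by simp
    moreover have "Fam l \<subseteq> SS" using Famj[OF that(1)] that False
      unfolding maximal_sep_family_def sep_family_def by auto
    ultimately show ?thesis by blast
  qed
  have finch: "finite (ch l S)" if "l \<le> k" for l
  proof (cases "l = 0")
    case True
    have "ch 0 S \<in> Fam 0" using ch_step[OF SS0, of 1] k1 by simp
    thus ?thesis using True Fam0 by simp
  next
    case False
    thus ?thesis using inSS[of l] that SSX finX by (auto intro: finite_subset)
  qed
  have step: "real (card (sym_diff (ch l S) (ch (l - 1) S))) \<le> real n / 2 ^ (l - 1)"
    if lk: "1 \<le> l" "l \<le> k" for l
  proof -
    have cS: "ch l S \<in> SS" using inSS that .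
    obtain F where F: "F \<in> Fam (l - 1)" "real (card (sym_diff (ch l S) F)) \<le> real n / 2 ^ (l - 1)"
    proof (cases "l = 1")
      case True
      have "ch l S \<subseteq> X" using cS SSX by auto
      hence "card (ch l S) \<le> n" using cardX finX card_mono by blast
      thus ?thesis using that(1)[of "{}"] True Fam0 by simp
    next
      case False
      have "maximal_sep_family SS (real n / 2 ^ (l - 1)) (Fam (l - 1))"
        using Famj[of "l - 1"] lk False by simp
      from maximal_near[OF this cS] show ?thesis using that(1) by auto
    qed
    have "card (sym_diff (ch l S) (ch (l - 1) S)) \<le> card (sym_diff (ch l S) F)"
      using ch_step[OF SS0 that] F(1) by blast
    thus ?thesis using F(2) by linarith
  qed
  have main: "real (card (sym_diff S (ch (k - m) S))) \<le> real n * (2 / 2 ^ (k - m) - 2 / 2 ^ k)"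
    if "m \<le> k" for m
    using that
  proof (induction m)
    case 0 thus ?case using ch_top SS0 by simp
  next
    case (Suc m)
    define l where "l = k - m"
    have l1: "1 \<le> l" "l \<le> k" using Suc.prems by (auto simp: l_def)
    have km: "k - Suc m = l - 1" by (simp add: l_def)
    have IH: "real (card (sym_diff S (ch l S))) \<le> real n * (2 / 2 ^ l - 2 / 2 ^ k)"
      using Suc by (simp add: l_def)
    have finS: "finite S" using SS0 SSX finX by (auto intro: finite_subset)
    have "card (sym_diff S (ch (l - 1) S)) \<le> card (sym_diff S (ch l S)) + card (sym_diff (ch l S) (ch (l - 1) S))"
      by (rule card_symdiff_tri) (use finS finch l1 in auto)
    hence "real (card (sym_diff S (ch (l - 1) S))) \<le> real n * (2 / 2 ^ l - 2 / 2 ^ k) + real n / 2 ^ (l - 1)"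
      using IH step[OF l1] by linarith
    also have "\<dots> = real n * (2 / 2 ^ (l - 1) - 2 / 2 ^ k)"
    proof -
      have "(2::real) ^ l = 2 * 2 ^ (l - 1)" using l1 by (metis Suc_diff_le diff_Suc_1 power_Suc)
      thus ?thesis by (simp add: field_simps)
    qed
    finally show ?case by (simp add: km)
  qed
  have jk: "j \<le> k" using j by simp
  from main[of "k - j"] jk have A: "real (card (sym_diff S (ch j S))) \<le> real n * (2 / 2 ^ j - 2 / 2 ^ k)"
    by simp
  have npos: "real n > 0" using n_def by simp
  have B: "real n * (2 / 2 ^ j - 2 / 2 ^ k) < real n * (2 / 2 ^ j)"
  proof -
    have "(0::real) < 2 / 2 ^ k" by simp
    hence "2 / 2 ^ j - 2 / 2 ^ k < (2::real) / 2 ^ j" by linarith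
    thus ?thesis using npos by (intro mult_strict_left_mono) auto
  qed
  have C: "(2::real) powr (real j - 1) = 2 ^ j / 2"
    by (simp add: powr_diff powr_realpow)
  show "real (card (sym_diff S (ch j S))) < real n / 2 powr (real j - 1)"
  proof -
    have "real n / 2 powr (real j - 1) = real n * (2 / 2 ^ j)" unfolding C by (simp add: field_simps)
    thus ?thesis using A B by linarith
  qed
qed

end
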